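(* Let $K=(S,L,\to)$ be a Kripke structure and $s,t\in S$. Then $s\leftrightarrow_b^{\Delta}t$ if and only if for every $\mathsf{CTL}_\infty$ formula $\varphi$: $s\models\varphi\iff t\models\varphi$.
   Context: Fix a set $\mathbf{AP}$ of atomic propositions. A Kripke structure is a triple $K=(S,L,\to)$ with $S$ a set of states, $L:S\to\mathcal{P}(\mathbf{AP})$ and $\to\subseteq S\times S$ (not required to be total). A finite path from $s$ is a sequence $s_0,\dots,s_n$ with $s_0=s$ and $s_k\to s_{k+1}$ for $0\le k<n$; an infinite path from $s$ is a sequence $s_0,s_1,\dots$ with $s_0=s$ and $s_k\to s_{k+1}$ for all $k$. A colouring is a function $\mathcal{C}$ from $S$ into an arbitrary set of colours. For a path $\pi=s_0,s_1,\dots$, $\mathcal{C}(\pi)$ is obtained from $\mathcal{C}(s_0),\mathcal{C}(s_1),\dots$ by contracting every maximal (finite or infinite) block of consecutive equal colours to a single colour. The $\mathcal{C}(\pi)$ with $\pi$ a path from $s$ are the $\mathcal{C}$-coloured traces of $s$; $\mathcal{C}(\pi)$ is a divergent $\mathcal{C}$-coloured trace of $s$ if $\pi$ is an infinite path from $s$ and $\mathcal{C}(\pi)$ is finite. A colouring is consistent if any two states of the same colour have the same $L$-label and the same $\mathcal{C}$-coloured traces; a consistent colouring preserves divergence if any two states of the same colour have the same divergent $\mathcal{C}$-coloured traces. $s\leftrightarrow_b^{\Delta}t$ iff there is a consistent, divergence preserving colouring $\mathcal{C}$ with $\mathcal{C}(s)=\mathcal{C}(t)$. $\mathsf{CTL}_\infty$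 formulas: $\varphi::=p\mid\neg\varphi\mid\bigwedge\Phi'\mid\exists(\varphi\,\mathsf{U}\,\varphi)\mid\exists^\infty\mathsf{G}\varphi$, with $p\in\mathbf{AP}$ and $\Phi'$ an arbitrary set of formulas. Semantics: $s\models p$ iff $p\in L(s)$; negation and conjunction as usual; $s\models\exists(\varphi\,\mathsf{U}\,\varphi')$ iff there is a finite path $s_0,\dots,s_k$ from $s$ with $s_k\models\varphi'$ and $s_i\models\varphi$ for all $0\le i<k$; $s\models\exists^\infty\mathsf{G}\varphi$ iff there is an infinite path from $s$ all of whose states satisfy $\varphi$. *)

theory Defs
  imports Main "HOL-Library.Infinite_Set"
begin

text \<open>A Kripke structure is given by a state type 's (S = UNIV), a labelling
  L :: 's => 'ap set and a (not necessarily total) transition relation R.\<close>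

definition fpath :: "('s \<Rightarrow> 's \<Rightarrow> bool) \<Rightarrow> 's \<Rightarrow> 's list \<Rightarrow> bool" where
  "fpath R s xs \<longleftrightarrow> xs \<noteq> [] \<and> hd xs = s \<and>
     (\<forall>k. Suc k < length xs \<longrightarrow> R (xs ! k) (xs ! Suc k))"

definition ipath :: "('s \<Rightarrow> 's \<Rightarrow> bool) \<Rightarrow> 's \<Rightarrow> (nat \<Rightarrow> 's) \<Rightarrow> bool" where
  "ipath R s f \<longleftrightarrow> f 0 = s \<and> (\<forall>k. R (f k) (f (Suc k)))"

fun destut :: "'c list \<Rightarrow> 'c list" where
  "destut [] = []"
| "destut [x] = [x]"
| "destut (x # y # xs) = (if x = y then destut (y # xs) else x # destut (y # xs))"

type_synonym 'c trace = "'c list + (nat \<Rightarrow> 'c)"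

definition ctr_fin :: "('s \<Rightarrow> 'c) \<Rightarrow> 's list \<Rightarrow> 'c trace" where
  "ctr_fin C xs = Inl (destut (map C xs))"

text \<open>Contraction of an infinite colour sequence: if it is eventually constant the
  result is finite (contract any prefix reaching the final block); otherwise it is the
  infinite sequence of block colours, where the (k+1)-th block starts right after the
  k-th index i with g (Suc i) ~= g i.\<close>
definition contract_inf :: "(nat \<Rightarrow> 'c) \<Rightarrow> 'c trace" where
  "contract_inf g =
     (if \<exists>n. \<forall>m\<ge>n. g m = g n
      then Inl (destut (map g [0..<Suc (LEAST n. \<forall>m\<ge>n. g m = g n)]))
      else Inr (\<lambda>k. case k of 0 \<Rightarrow> g 0
                   | Suc j \<Rightarrow> g (Suc (enumerate {i. g (Suc i) \<noteq> g i} j))))"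

definition ctr_inf :: "('s \<Rightarrow> 'c) \<Rightarrow> (nat \<Rightarrow> 's) \<Rightarrow> 'c trace" where
  "ctr_inf C f = contract_inf (C \<circ> f)"

definition ctraces :: "('s \<Rightarrow> 's \<Rightarrow> bool) \<Rightarrow> ('s \<Rightarrow> 'c) \<Rightarrow> 's \<Rightarrow> 'c trace set" where
  "ctraces R C s = {ctr_fin C xs | xs. fpath R s xs} \<union> {ctr_inf C f | f. ipath R s f}"

definition div_ctraces :: "('s \<Rightarrow> 's \<Rightarrow> bool) \<Rightarrow> ('s \<Rightarrow> 'c) \<Rightarrow> 's \<Rightarrow> 'c trace set" where
  "div_ctraces R C s = {ctr_inf C f | f. ipath R s f \<and> (\<exists>xs. ctr_inf C f = Inl xs)}"

definition consistent :: "('s \<Rightarrow> 'ap set) \<Rightarrow> ('s \<Rightarrow> 's \<Rightarrow> bool) \<Rightarrow> ('s \<Rightarrow> 'c) \<Rightarrow> bool" where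
  "consistent L R C \<longleftrightarrow>
     (\<forall>s t. C s = C t \<longrightarrow> L s = L t \<and> ctraces R C s = ctraces R C t)"

definition div_preserving :: "('s \<Rightarrow> 's \<Rightarrow> bool) \<Rightarrow> ('s \<Rightarrow> 'c) \<Rightarrow> bool" where
  "div_preserving R C \<longleftrightarrow> (\<forall>s t. C s = C t \<longrightarrow> div_ctraces R C s = div_ctraces R C t)"

text \<open>Colours are taken in 's set; any
  colouring into an arbitrary colour set can be replaced by its kernel
  s |-> {t. C t = C s} without changing any of the defining conditions.\<close>
definition bbisim_div :: "('s \<Rightarrow> 'ap set) \<Rightarrow> ('s \<Rightarrow> 's \<Rightarrow> bool) \<Rightarrow> 's \<Rightarrow> 's \<Rightarrow> bool" where
  "bbisim_div L R s t \<longleftrightarrow>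
     (\<exists>C :: 's \<Rightarrow> 's set. consistent L R C \<and> div_preserving R C \<and> C s = C t)"

text \<open>CTL_infinity formulas; conjunction over an arbitrary set of formulas is
  represented as conjunction of a family indexed by a set I :: 'i set.\<close>
datatype ('ap, 'i) ctl =
    Atom 'ap
  | Neg "('ap, 'i) ctl"
  | Conj "'i set" "'i \<Rightarrow> ('ap, 'i) ctl"
  | EU "('ap, 'i) ctl" "('ap, 'i) ctl"
  | EG "('ap, 'i) ctl"

primrec sat :: "('s \<Rightarrow> 'ap set) \<Rightarrow> ('s \<Rightarrow> 's \<Rightarrow> bool) \<Rightarrow> ('ap, 'i) ctl \<Rightarrow> 's \<Rightarrow> bool" where
  "sat L R (Atom p) s = (p \<in> L s)"
| "sat L R (Neg \<phi>) s = (\<not> sat L R \<phi> s)"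
| "sat L R (Conj I F) s = (\<forall>i\<in>I. sat L R (F i) s)"
| "sat L R (EU \<phi> \<psi>) s = (\<exists>xs. fpath R s xs \<and> sat L R \<psi> (last xs) \<and>
                               (\<forall>i. Suc i < length xs \<longrightarrow> sat L R \<phi> (xs ! i)))"
| "sat L R (EG \<phi>) s = (\<exists>f. ipath R s f \<and> (\<forall>k. sat L R \<phi> (f k)))"

end

theory Submission
  imports Defs
begin


lemma destut_set[simp]: "set (destut l) = set l"
  by (induction l rule: destut.induct) auto

lemma destut_Nil_iff[simp]: "destut l = [] \<longleftrightarrow> l = []"
  by (induction l rule: destut.induct) auto

lemma destut_hd: "l \<noteq> [] \<Longrightarrow> hd (destut l) = hd l"
  by (induction l rule: destut.induct) auto

lemma destut_last: "l \<noteq> [] \<Longrightarrow> last (destut l) = last l"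
  by (induction l rule: destut.induct) auto

lemma destut_app_const:
  "xs \<noteq> [] \<Longrightarrow> \<forall>x\<in>set xs. x = a \<Longrightarrow> ys \<noteq> [] \<Longrightarrow> hd ys \<noteq> a \<Longrightarrow>
   destut (xs @ ys) = a # destut ys"
proof (induction xs)
  case Nil then show ?case by simp
next
  case (Cons x xs)
  note IH = Cons.IH and pr = Cons.prems
  show ?case
  proof (cases xs)
    case Nil
    then show ?thesis using pr by (cases ys) auto
  next
    case (Cons x' xs')
    have xa: "x = a" "x' = a" using pr Cons by auto
    have "destut (xs @ ys) = a # destut ys" using IH pr Cons by simp
    then show ?thesis using xa Cons by simp
  qed
qed

lemma destut_snoc_last: "xs \<noteq> [] \<Longrightarrow> destut (xs @ [last xs]) = destut xs"
  by (induction xs rule: destut.induct) auto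

lemma destut_decomp:
  "destut l = a # b # r \<Longrightarrow> \<exists>k. 0 < k \<and> k < length l \<and> (\<forall>i<k. l ! i = a) \<and> destut (drop k l) = b # r"
proof (induction l arbitrary: a b r rule: destut.induct)
  case 1 then show ?case by simp
next
  case (2 x) then show ?case by simp
next
  case (3 x y xs)
  show ?case
  proof (cases "x = y")
    case True
    with 3 obtain k where k: "0 < k" "k < length (y # xs)" "\<forall>i<k. (y#xs) ! i = a"
        "destut (drop k (y#xs)) = b # r" by auto
    show ?thesis
      apply (rule exI[of _ "Suc k"])
      using k True by (auto simp: nth_Cons split: nat.split)
  next
    case False
    then show ?thesis using 3 by (intro exI[of _ 1]) auto
  qed
qed

lemma fpath_Nil[simp]: "\<not> fpath R s []" by (simp add: fpath_def)
lemma fpath_single[simp]: "fpath R s [x] \<longleftrightarrow> x = s" by (simp add: fpath_def)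
lemma fpath_Cons2[simp]: "fpath R s (x # y # xs) \<longleftrightarrow> x = s \<and> R x y \<and> fpath R y (y # xs)"
  unfolding fpath_def
  by (auto simp: nth_Cons split: nat.split)

lemma fpath_hd: "fpath R s xs \<Longrightarrow> hd xs = s" by (simp add: fpath_def)
lemma fpath_nth0: "fpath R s xs \<Longrightarrow> xs ! 0 = s" by (metis fpath_def hd_conv_nth)

lemma fpath_take: "fpath R s xs \<Longrightarrow> 0 < n \<Longrightarrow> fpath R s (take n xs)"
  unfolding fpath_def by (auto simp: hd_conv_nth)

lemma fpath_edge: "fpath R s xs \<Longrightarrow> Suc k < length xs \<Longrightarrow> R (xs ! k) (xs ! Suc k)"
  by (simp add: fpath_def)

lemma fpath_concat: "fpath R s zs \<Longrightarrow> fpath R (last zs) ys \<Longrightarrow> fpath R s (butlast zs @ ys)"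
proof (induction zs arbitrary: s)
  case Nil then show ?case by simp
next
  case (Cons z zs)
  show ?case
  proof (cases zs)
    case Nil then show ?thesis using Cons.prems by simp
  next
    case (Cons z' zs')
    then have IH: "fpath R z' (butlast zs @ ys)" using Cons.IH Cons.prems by auto
    then obtain rest where rest: "butlast zs @ ys = z' # rest"
      by (metis fpath_hd fpath_Nil list.exhaust list.sel(1))
    show ?thesis using Cons Cons.prems IH rest by auto
  qed
qed

lemma ipath_prefix: "ipath R u f \<Longrightarrow> fpath R u (map f [0..<Suc N])"
  unfolding ipath_def fpath_def by (auto simp: hd_map nth_append simp del: upt_Suc)



lemma const_stretch: "(\<And>i. n \<le> i \<Longrightarrow> i < m \<Longrightarrow> a (Suc i) = a i) \<Longrightarrow> n \<le> m \<Longrightarrow> a m = a n"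
  by (induction m) (auto simp: le_Suc_eq)

lemma not_evconst_infinite:
  assumes "\<not> (\<exists>n. \<forall>m\<ge>n. a m = a n)"
  shows "infinite {i. a (Suc i) \<noteq> a i}"
proof
  assume "finite {i. a (Suc i) \<noteq> a i}"
  then obtain N where N: "{i. a (Suc i) \<noteq> a i} \<subseteq> {..<N}" using finite_nat_bounded by blast
  have "\<forall>m\<ge>N. a m = a N"
  proof (intro allI impI)
    fix m assume "N \<le> m"
    show "a m = a N"
      by (rule const_stretch[OF _ \<open>N \<le> m\<close>]) (use N in force)
  qed
  with assms show False by blast
qed

fun tset :: "'c trace \<Rightarrow> 'c set" where
  "tset (Inl l) = set l"
| "tset (Inr h) = range h"

lemma contract_inf_Inl:
  assumes "\<forall>m\<ge>N. a m = a N"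
  shows "contract_inf a = Inl (destut (map a [0..<Suc N]))"
proof -
  have ex: "\<exists>n. \<forall>m\<ge>n. a m = a n" using assms by blast
  define N0 where "N0 = (LEAST n. \<forall>m\<ge>n. a m = a n)"
  have N0: "\<forall>m\<ge>N0. a m = a N0" unfolding N0_def by (rule LeastI_ex[OF ex])
  have le: "N0 \<le> N" unfolding N0_def by (rule Least_le) (use assms in blast)
  have "destut (map a [0..<Suc n]) = destut (map a [0..<Suc N0])" if "N0 \<le> n" for n
    using that
  proof (induction n rule: dec_induct)
    case base then show ?case by simp
  next
    case (step n)
    have "a (Suc n) = a n" using N0 step.hyps by (metis le_SucI)
    then have e: "map a [0..<Suc (Suc n)] = map a [0..<Suc n] @ [last (map a [0..<Suc n])]"
      by simp
    have "destut (map a [0..<Suc (Suc n)]) = destut (map a [0..<Suc n] @ [last (map a [0..<Suc n])])"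
      by (simp only: e)
    also have "\<dots> = destut (map a [0..<Suc n])" by (rule destut_snoc_last) simp
    finally show ?case using step.IH by simp
  qed
  then have d: "destut (map a [0..<Suc N]) = destut (map a [0..<Suc N0])" using le by blast
  have "contract_inf a = Inl (destut (map a [0..<Suc N0]))"
    unfolding contract_inf_def N0_def using ex by (simp del: upt_Suc)
  then show ?thesis using d by simp
qed

lemma contract_inf_Inr:
  assumes "\<not> (\<exists>n. \<forall>m\<ge>n. a m = a n)"
  shows "contract_inf a = Inr (\<lambda>k. case k of 0 \<Rightarrow> a 0
                   | Suc j \<Rightarrow> a (Suc (enumerate {i. a (Suc i) \<noteq> a i} j)))"
  using assms unfolding contract_inf_def by simp

lemma contract_inf_range: "range a = tset (contract_inf a)"
proof (cases "\<exists>n. \<forall>m\<ge>n. a m = a n")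
  case True
  define N where "N = (LEAST n. \<forall>m\<ge>n. a m = a n)"
  have N: "\<forall>m\<ge>N. a m = a N" unfolding N_def by (rule LeastI_ex[OF True])
  have "range a = a ` {0..<Suc N}"
  proof
    show "range a \<subseteq> a ` {0..<Suc N}"
    proof
      fix x assume "x \<in> range a"
      then obtain m where m: "x = a m" by blast
      show "x \<in> a ` {0..<Suc N}"
      proof (cases "m \<le> N")
        case True then show ?thesis using m by (intro image_eqI[of _ _ m]) auto
      next
        case False
        then have "a m = a N" by (intro N[rule_format]) simp
        then have "x = a N" using m by simp
        moreover have "N \<in> {0..<Suc N}" by simp
        ultimately show ?thesis by blast
      qed
    qed
  qed auto
  also have "\<dots> = set (map a [0..<Suc N])" by (simp only: set_map set_upt)
  also have "\<dots> = tset (contract_inf a)" using contract_inf_Inl[OF N] by simp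
  finally show ?thesis .
next
  case False
  define S where "S = {i. a (Suc i) \<noteq> a i}"
  have inf: "infinite S" using not_evconst_infinite[OF False] S_def by simp
  define h where "h = (\<lambda>k. case k of 0 \<Rightarrow> a 0 | Suc j \<Rightarrow> a (Suc (enumerate S j)))"
  have eq: "contract_inf a = Inr h" unfolding h_def S_def by (rule contract_inf_Inr[OF False])
  have "\<exists>k. a m = h k" for m
  proof (induction m)
    case 0 then show ?case by (auto simp: h_def intro: exI[of _ 0])
  next
    case (Suc m)
    show ?case
    proof (cases "a (Suc m) = a m")
      case True then show ?thesis using Suc by simp
    next
      case False
      then have "m \<in> S" by (simp add: S_def)
      then obtain j where "enumerate S j = m" using enumerate_Ex[OF inf] by blast
      then show ?thesis by (intro exI[of _ "Suc j"]) (simp add: h_def)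
    qed
  qed
  moreover have "h k \<in> range a" for k by (cases k) (auto simp: h_def)
  ultimately have "range a = range h" by blast
  then show ?thesis using eq by simp
qed

lemma inr_blocks:
  assumes "contract_inf a = Inr h"
  shows "a 0 = h 0 \<and> (\<forall>k. h (Suc k) \<noteq> h k \<and> (\<exists>n. a n = h k \<and> a (Suc n) = h (Suc k)))"
proof -
  have ne: "\<not> (\<exists>n. \<forall>m\<ge>n. a m = a n)" using assms unfolding contract_inf_def by (auto split: if_splits)
  define S where "S = {i. a (Suc i) \<noteq> a i}"
  have inf: "infinite S" using not_evconst_infinite[OF ne] S_def by simp
  have h: "h = (\<lambda>k. case k of 0 \<Rightarrow> a 0 | Suc j \<Rightarrow> a (Suc (enumerate S j)))"
    unfolding S_def using assms contract_inf_Inr[OF ne] by simp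
  have ak: "a (enumerate S k) = h k" for k
  proof (cases k)
    case 0
    have "a (enumerate S 0) = a 0"
    proof (rule const_stretch)
      fix i assume "0 \<le> i" "i < enumerate S 0"
      then have "i \<notin> S" using enumerate_0[of S] by (metis not_less_Least)
      then show "a (Suc i) = a i" by (simp add: S_def)
    qed simp
    then show ?thesis using 0 h by simp
  next
    case (Suc j)
    have st: "enumerate S j < enumerate S (Suc j)" by (rule enumerate_step[OF inf])
    have "a (enumerate S (Suc j)) = a (Suc (enumerate S j))"
    proof (rule const_stretch)
      fix i assume i: "Suc (enumerate S j) \<le> i" "i < enumerate S (Suc j)"
      have "i \<notin> S"
      proof
        assume "i \<in> S"
        then have "(LEAST s. s \<in> S \<and> enumerate S j < s) \<le> i" using i by (intro Least_le) auto
        then show False using i enumerate_Suc''[OF inf, of j] by simp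
      qed
      then show "a (Suc i) = a i" by (simp add: S_def)
    qed (use st in simp)
    then show ?thesis using Suc h by simp
  qed
  have "\<forall>k. h (Suc k) \<noteq> h k \<and> (\<exists>n. a n = h k \<and> a (Suc n) = h (Suc k))"
  proof
    fix k
    have "enumerate S k \<in> S" by (rule enumerate_in_set[OF inf])
    then have "a (Suc (enumerate S k)) \<noteq> a (enumerate S k)" by (simp add: S_def)
    moreover have "a (Suc (enumerate S k)) = h (Suc k)" using h by simp
    ultimately show "h (Suc k) \<noteq> h k \<and> (\<exists>n. a n = h k \<and> a (Suc n) = h (Suc k))"
      using ak by metis
  qed
  then show ?thesis using h by simp
qed



lemma contract_beta:
  fixes \<beta> :: "nat \<Rightarrow> nat"
  assumes b0: "\<beta> 0 = 0" and bs: "\<And>n. \<beta> (Suc n) = \<beta> n \<or> \<beta> (Suc n) = Suc (\<beta> n)"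
    and surj: "\<And>k. \<exists>n. \<beta> n = k" and dist: "\<And>k. h (Suc k) \<noteq> h k"
  shows "contract_inf (h \<circ> \<beta>) = Inr h"
proof -
  define a where "a = h \<circ> \<beta>"
  have mono: "\<beta> m \<le> \<beta> n" if "m \<le> n" for m n
  proof -
    have "\<beta> n \<le> \<beta> (Suc n)" for n using bs[of n] by auto
    then show ?thesis using lift_Suc_mono_le[of \<beta>] that by blast
  qed
  have S_iff: "a (Suc i) \<noteq> a i \<longleftrightarrow> \<beta> (Suc i) = Suc (\<beta> i)" for i
    using bs[of i] dist[of "\<beta> i"] by (auto simp: a_def)
  have ne: "\<not> (\<exists>n. \<forall>m\<ge>n. a m = a n)"
  proof
    assume "\<exists>n. \<forall>m\<ge>n. a m = a n"
    then obtain n where n: "\<forall>m\<ge>n. a m = a n" by blast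
    obtain m where m: "\<beta> m = Suc (\<beta> n)" using surj by blast
    have "n \<le> m" using mono[of m n] m by (cases "n \<le> m") auto
    then have "a m = a n" by (intro n[rule_format])
    then show False using m dist[of "\<beta> n"] by (simp add: a_def)
  qed
  define S where "S = {i. a (Suc i) \<noteq> a i}"
  have inf: "infinite S" using not_evconst_infinite[OF ne] S_def by simp
  have eq: "contract_inf a = Inr (\<lambda>k. case k of 0 \<Rightarrow> a 0 | Suc j \<Rightarrow> a (Suc (enumerate S j)))"
    unfolding S_def by (rule contract_inf_Inr[OF ne])
  have bj: "\<beta> (enumerate S j) = j" for j
  proof (induction j)
    case 0
    have "\<beta> (enumerate S 0) = \<beta> 0"
    proof (rule const_stretch[where a=\<beta>])
      fix i assume "0 \<le> i" "i < enumerate S 0"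
      then have "i \<notin> S" using enumerate_0[of S] by (metis not_less_Least)
      then show "\<beta> (Suc i) = \<beta> i" using S_iff bs by (auto simp: S_def)
    qed simp
    then show ?case using b0 by simp
  next
    case (Suc j)
    have st: "enumerate S j < enumerate S (Suc j)" by (rule enumerate_step[OF inf])
    have "\<beta> (enumerate S (Suc j)) = \<beta> (Suc (enumerate S j))"
    proof (rule const_stretch[where a=\<beta>])
      fix i assume i: "Suc (enumerate S j) \<le> i" "i < enumerate S (Suc j)"
      have "i \<notin> S"
      proof
        assume "i \<in> S"
        then have "(LEAST s. s \<in> S \<and> enumerate S j < s) \<le> i" using i by (intro Least_le) auto
        then show False using i enumerate_Suc''[OF inf, of j] by simp
      qed
      then show "\<beta> (Suc i) = \<beta> i" using S_iff bs by (auto simp: S_def)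
    qed (use st in simp)
    moreover have "enumerate S j \<in> S" by (rule enumerate_in_set[OF inf])
    ultimately show ?case using Suc S_iff by (simp add: S_def)
  qed
  have bj2: "\<beta> (Suc (enumerate S j)) = Suc j" for j
  proof -
    have "enumerate S j \<in> S" by (rule enumerate_in_set[OF inf])
    then show ?thesis using S_iff bj[of j] by (simp add: S_def)
  qed
  have "(\<lambda>k. case k of 0 \<Rightarrow> a 0 | Suc j \<Rightarrow> a (Suc (enumerate S j))) = h"
  proof
    fix k show "(case k of 0 \<Rightarrow> a 0 | Suc j \<Rightarrow> a (Suc (enumerate S j))) = h k"
      by (cases k) (simp_all add: a_def b0 bj2)
  qed
  then show ?thesis using eq a_def by simp
qed

primrec chainY :: "('s \<Rightarrow> nat \<Rightarrow> 's list) \<Rightarrow> 's \<Rightarrow> nat \<Rightarrow> 's list" where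
  "chainY F v 0 = F v 0"
| "chainY F v (Suc k) = F (last (chainY F v k)) (Suc k)"

primrec posf :: "(nat \<Rightarrow> nat) \<Rightarrow> nat \<Rightarrow> nat \<times> nat" where
  "posf l 0 = (0, 0)"
| "posf l (Suc n) = (if Suc (snd (posf l n)) < l (fst (posf l n))
                     then (fst (posf l n), Suc (snd (posf l n))) else (Suc (fst (posf l n)), 0))"

lemma posf_inv: "(\<And>k. 0 < l k) \<Longrightarrow> snd (posf l n) < l (fst (posf l n))"
  by (induction n) auto

lemma posf_walk: "posf l n = (k, 0) \<Longrightarrow> d < l k \<Longrightarrow> posf l (n + d) = (k, d)"
  by (induction d) auto

lemma posf_surj: assumes "\<And>k. 0 < l k" shows "\<exists>n. posf l n = (k, 0)"
proof (induction k)
  case 0 then show ?case by (intro exI[of _ 0]) simp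
next
  case (Suc k)
  then obtain n where n: "posf l n = (k, 0)" by blast
  define m where "m = n + (l k - 1)"
  have "posf l m = (k, l k - 1)" unfolding m_def by (rule posf_walk[OF n]) (use assms[of k] in simp)
  then have "posf l (Suc m) = (Suc k, 0)" using assms[of k] by simp
  then show ?case by blast
qed

lemma build_inf:
  fixes C :: "'s \<Rightarrow> 'c"
  assumes step: "\<And>k w. C w = h k \<Longrightarrow> \<exists>ys. fpath R w ys \<and> C (last ys) = h (Suc k) \<and>
                    (\<forall>i. Suc i < length ys \<longrightarrow> C (ys ! i) = h k)"
    and dist: "\<And>k. h (Suc k) \<noteq> h k" and v: "C v = h 0"
  shows "\<exists>g. ipath R v g \<and> contract_inf (C \<circ> g) = Inr h"
proof -
  define P where "P = (\<lambda>w k ys. fpath R w ys \<and> C (last ys) = h (Suc k) \<and>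
                    (\<forall>i. Suc i < length ys \<longrightarrow> C (ys ! i) = h k))"
  define F where "F = (\<lambda>w k. SOME ys. P w k ys)"
  define Y where "Y = chainY F v"
  define W where "W = (\<lambda>k. case k of 0 \<Rightarrow> v | Suc j \<Rightarrow> last (Y j))"
  have YS: "Y (Suc k) = F (W (Suc k)) (Suc k)" "Y 0 = F (W 0) 0" for k
    by (simp_all add: Y_def W_def)
  have PY: "P (W k) k (Y k) \<and> C (W k) = h k" for k
  proof (induction k)
    case 0
    have "C (W 0) = h 0" using v by (simp add: W_def)
    then have "\<exists>ys. P (W 0) 0 ys" using step unfolding P_def by blast
    then have "P (W 0) 0 (Y 0)" unfolding YS F_def by (rule someI_ex)
    then show ?case using v by (simp add: W_def)
  next
    case (Suc k)
    have c: "C (W (Suc k)) = h (Suc k)" using Suc by (simp add: W_def P_def)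
    then have "\<exists>ys. P (W (Suc k)) (Suc k) ys" using step unfolding P_def by blast
    then have "P (W (Suc k)) (Suc k) (Y (Suc k))" unfolding YS F_def by (rule someI_ex)
    then show ?case using c by simp
  qed
  define l where "l = (\<lambda>k. length (Y k) - 1)"
  have len: "2 \<le> length (Y k)" for k
  proof -
    have p: "P (W k) k (Y k)" "C (W k) = h k" using PY by auto
    then have ne: "Y k \<noteq> []" by (auto simp: P_def)
    show ?thesis
    proof (rule ccontr)
      assume "\<not> 2 \<le> length (Y k)"
      moreover have "length (Y k) \<noteq> 0" using ne by simp
      ultimately have "length (Y k) = 1" by linarith
      then have "last (Y k) = hd (Y k)" by (cases "Y k") auto
      moreover have "hd (Y k) = W k" using p(1) fpath_hd[of R "W k" "Y k"] by (simp add: P_def)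
      ultimately have "C (last (Y k)) = h k" using p(2) by simp
      then show False using p dist[of k] by (simp add: P_def)
    qed
  qed
  have lpos: "0 < l k" for k using len[of k] by (simp add: l_def)
  define g where "g = (\<lambda>n. Y (fst (posf l n)) ! snd (posf l n))"
  have col: "C (g n) = h (fst (posf l n))" for n
  proof -
    obtain k i where ki: "posf l n = (k, i)" by (cases "posf l n")
    have "i < l k" using posf_inv[of l n, OF lpos] ki by simp
    then have "Suc i < length (Y k)" by (simp add: l_def)
    then show ?thesis using PY[of k] ki by (simp add: g_def P_def)
  qed
  have ip: "ipath R v g"
    unfolding ipath_def
  proof (intro conjI allI)
    have "fpath R (W 0) (Y 0)" using PY[of 0] by (simp add: P_def)
    then show "g 0 = v" using fpath_nth0 by (fastforce simp: g_def W_def)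
  next
    fix n
    obtain k i where ki: "posf l n = (k, i)" by (cases "posf l n")
    have il: "i < l k" using posf_inv[of l n, OF lpos] ki by simp
    have fp: "fpath R (W k) (Y k)" using PY[of k] by (simp add: P_def)
    show "R (g n) (g (Suc n))"
    proof (cases "Suc i < l k")
      case True
      then have "Suc i < length (Y k)" by (simp add: l_def)
      then show ?thesis using fpath_edge[OF fp] ki True by (simp add: g_def)
    next
      case False
      then have si: "Suc i = l k" using il by simp
      then have "Suc i < length (Y k)" using len[of k] by (simp add: l_def)
      then have e: "R (Y k ! i) (Y k ! Suc i)" using fpath_edge[OF fp] by simp
      have "Y (Suc k) ! 0 = W (Suc k)" using PY[of "Suc k"] fpath_nth0[of R "W (Suc k)" "Y (Suc k)"] by (simp add: P_def)
      also have "\<dots> = last (Y k)" by (simp add: W_def)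
      also have "\<dots> = Y k ! Suc i"
      proof -
        have "Y k \<noteq> []" using len[of k] by auto
        then show ?thesis using si by (simp add: l_def last_conv_nth)
      qed
      finally show ?thesis using e ki False by (simp add: g_def)
    qed
  qed
  have "C \<circ> g = h \<circ> (fst \<circ> posf l)" using col by (auto simp: fun_eq_iff)
  moreover have "contract_inf (h \<circ> (fst \<circ> posf l)) = Inr h"
  proof (rule contract_beta)
    show "(fst \<circ> posf l) 0 = 0" by simp
    show "(fst \<circ> posf l) (Suc n) = (fst \<circ> posf l) n \<or> (fst \<circ> posf l) (Suc n) = Suc ((fst \<circ> posf l) n)" for n
      by simp
    show "\<exists>n. (fst \<circ> posf l) n = k" for k
    proof -
      obtain n where "posf l n = (k, 0)" using posf_surj[of l k] lpos by blast
      then show ?thesis by (intro exI[of _ n]) simp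
    qed
  qed (rule dist)
  ultimately show ?thesis using ip by auto
qed



definition transfer :: "('s \<Rightarrow> 's \<Rightarrow> bool) \<Rightarrow> ('s \<Rightarrow> 'c) \<Rightarrow> bool" where
  "transfer R C \<longleftrightarrow> (\<forall>x w x'. C x = C w \<longrightarrow> R x x' \<longrightarrow> C x' \<noteq> C x \<longrightarrow>
     (\<exists>ys. fpath R w ys \<and> C (last ys) = C x' \<and> (\<forall>i. Suc i < length ys \<longrightarrow> C (ys ! i) = C x)))"

lemma seg_facts:
  assumes "fpath R w zs" "C (last zs) = c'" "\<forall>i. Suc i < length zs \<longrightarrow> C (zs ! i) = c" "c' \<noteq> c"
    "C w = c"
  shows "butlast zs \<noteq> [] \<and> (\<forall>x\<in>set (butlast zs). C x = c)"
proof -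
  have ne: "zs \<noteq> []" using assms(1) by auto
  have "butlast zs \<noteq> []"
  proof
    assume "butlast zs = []"
    then have "zs = [w]" using ne fpath_hd[OF assms(1)] by (cases zs) (auto split: if_splits)
    then show False using assms by simp
  qed
  moreover have "\<forall>x\<in>set (butlast zs). C x = c"
  proof
    fix x assume "x \<in> set (butlast zs)"
    then obtain i where i: "i < length (butlast zs)" "butlast zs ! i = x" by (auto simp: in_set_conv_nth)
    then have "zs ! i = x" "Suc i < length zs" by (auto simp: nth_butlast)
    then show "C x = c" using assms(3) by auto
  qed
  ultimately show ?thesis by blast
qed

lemma fin_transfer:
  assumes T: "transfer R C"
  shows "fpath R u xs \<Longrightarrow> C u = C v \<Longrightarrow> \<exists>ys. fpath R v ys \<and> destut (map C ys) = destut (map C xs)"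
proof (induction xs arbitrary: u v)
  case Nil then show ?case by simp
next
  case (Cons x xs)
  show ?case
  proof (cases xs)
    case Nil
    then show ?thesis using Cons.prems by (intro exI[of _ "[v]"]) auto
  next
    case (Cons u' rest)
    have xu: "x = u" and e: "R u u'" and fp: "fpath R u' xs" using Cons.prems Cons by auto
    show ?thesis
    proof (cases "C u' = C u")
      case True
      then obtain ys where "fpath R v ys" "destut (map C ys) = destut (map C xs)"
        using Cons.IH[OF fp] Cons.prems by auto
      then show ?thesis using True xu Cons by auto
    next
      case False
      have "\<exists>zs. fpath R v zs \<and> C (last zs) = C u' \<and> (\<forall>i. Suc i < length zs \<longrightarrow> C (zs ! i) = C u)"
        using T Cons.prems(2) e False unfolding transfer_def by blast
      then obtain zs where zs: "fpath R v zs" "C (last zs) = C u'" "\<forall>i. Suc i < length zs \<longrightarrow> C (zs ! i) = C u"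
        by blast
      obtain ys where ys: "fpath R (last zs) ys" "destut (map C ys) = destut (map C xs)"
        using Cons.IH[OF fp] zs(2) by metis
      have sf: "butlast zs \<noteq> [] \<and> (\<forall>x\<in>set (butlast zs). C x = C u)"
        using seg_facts[OF zs(1) zs(2) zs(3) False] Cons.prems(2) by simp
      have yne: "ys \<noteq> []" using ys(1) by auto
      have hy: "hd (map C ys) = C u'" using ys(1) zs(2) yne by (simp add: hd_map fpath_hd)
      have "destut (map C (butlast zs @ ys)) = C u # destut (map C ys)"
        using destut_app_const[of "map C (butlast zs)" "C u" "map C ys"] sf yne hy False by auto
      also have "\<dots> = destut (map C (x # xs))" using ys(2) xu Cons False by simp
      finally show ?thesis using fpath_concat[OF zs(1) ys(1)] by blast
    qed
  qed
qed

lemma EU_transfer: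
  assumes T: "transfer R C"
    and P: "\<And>u v. C u = C v \<Longrightarrow> P u \<Longrightarrow> P v"
    and Q: "\<And>u v. C u = C v \<Longrightarrow> Q u \<Longrightarrow> Q v"
  shows "fpath R u xs \<Longrightarrow> Q (last xs) \<Longrightarrow> (\<forall>i. Suc i < length xs \<longrightarrow> P (xs ! i)) \<Longrightarrow> C u = C v \<Longrightarrow>
     \<exists>ys. fpath R v ys \<and> Q (last ys) \<and> (\<forall>i. Suc i < length ys \<longrightarrow> P (ys ! i))"
proof (induction xs arbitrary: u v)
  case Nil then show ?case by simp
next
  case (Cons x xs)
  show ?case
  proof (cases xs)
    case Nil
    then have "Q u" using Cons.prems(1,2) by simp
    then have "Q v" using Q Cons.prems(4) by blast
    then show ?thesis by (intro exI[of _ "[v]"]) simp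
  next
    case (Cons u' rest)
    have xu: "x = u" and e: "R u u'" and fp: "fpath R u' xs" using Cons.prems Cons by auto
    have "P ((x # xs) ! 0)" using spec[OF Cons.prems(3), of 0] Cons by simp
    then have Pu: "P u" using xu by simp
    have IHp: "Q (last xs)" "\<forall>i. Suc i < length xs \<longrightarrow> P (xs ! i)"
      using Cons.prems(2,3) Cons by auto
    show ?thesis
    proof (cases "C u' = C u")
      case True
      then show ?thesis using Cons.IH[OF fp IHp] Cons.prems(4) by auto
    next
      case False
      have "\<exists>zs. fpath R v zs \<and> C (last zs) = C u' \<and> (\<forall>i. Suc i < length zs \<longrightarrow> C (zs ! i) = C u)"
        using T Cons.prems(4) e False unfolding transfer_def by blast
      then obtain zs where zs: "fpath R v zs" "C (last zs) = C u'" "\<forall>i. Suc i < length zs \<longrightarrow> C (zs ! i) = C u"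
        by blast
      obtain ys where ys: "fpath R (last zs) ys" "Q (last ys)" "\<forall>i. Suc i < length ys \<longrightarrow> P (ys ! i)"
        using Cons.IH[OF fp IHp] zs(2) by metis
      have sf: "butlast zs \<noteq> [] \<and> (\<forall>x\<in>set (butlast zs). C x = C u)"
        using seg_facts[OF zs(1) zs(2) zs(3) False] Cons.prems(4) by simp
      have yne: "ys \<noteq> []" using ys(1) by auto
      have "\<forall>i. Suc i < length (butlast zs @ ys) \<longrightarrow> P ((butlast zs @ ys) ! i)"
      proof (intro allI impI)
        fix i assume i: "Suc i < length (butlast zs @ ys)"
        show "P ((butlast zs @ ys) ! i)"
        proof (cases "i < length (butlast zs)")
          case True
          then have "C ((butlast zs @ ys) ! i) = C u" using sf by (simp add: nth_append)
          then show ?thesis using P[OF _ Pu] by metis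
        next
          case False
          then show ?thesis using ys(3) i by (simp add: nth_append)
        qed
      qed
      then show ?thesis using fpath_concat[OF zs(1) ys(1)] ys(2) yne by auto
    qed
  qed
qed

lemma ctraces_sub:
  assumes T: "transfer R C" and uv: "C u = C v"
  shows "ctraces R C u \<subseteq> ctraces R C v"
proof
  fix tr assume "tr \<in> ctraces R C u"
  then consider (fin) xs where "fpath R u xs" "tr = ctr_fin C xs"
    | (inf) f where "ipath R u f" "tr = ctr_inf C f" unfolding ctraces_def by blast
  then show "tr \<in> ctraces R C v"
  proof cases
    case fin
    then obtain ys where "fpath R v ys" "destut (map C ys) = destut (map C xs)"
      using fin_transfer[OF T] uv by metis
    then show ?thesis using fin unfolding ctraces_def ctr_fin_def by auto
  next
    case inf
    show ?thesis
    proof (cases "\<exists>n. \<forall>m\<ge>n. (C \<circ> f) m = (C \<circ> f) n")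
      case True
      then obtain N where N: "\<forall>m\<ge>N. (C \<circ> f) m = (C \<circ> f) N" by blast
      have "tr = ctr_fin C (map f [0..<Suc N])"
        using inf contract_inf_Inl[OF N] unfolding ctr_inf_def ctr_fin_def by (simp add: o_def del: upt_Suc)
      moreover obtain ys where "fpath R v ys" "destut (map C ys) = destut (map C (map f [0..<Suc N]))"
        using fin_transfer[OF T ipath_prefix[OF inf(1)] uv] by metis
      ultimately show ?thesis unfolding ctraces_def ctr_fin_def by auto
    next
      case False
      obtain h where h: "contract_inf (C \<circ> f) = Inr h" using contract_inf_Inr[OF False] by blast
      note hb = inr_blocks[OF h]
      have "\<exists>g. ipath R v g \<and> contract_inf (C \<circ> g) = Inr h"
      proof (rule build_inf)
        fix k w assume w: "C w = h k"
        obtain n where n: "C (f n) = h k" "C (f (Suc n)) = h (Suc k)" using hb by auto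
        have "R (f n) (f (Suc n))" using inf(1) by (simp add: ipath_def)
        then show "\<exists>ys. fpath R w ys \<and> C (last ys) = h (Suc k) \<and> (\<forall>i. Suc i < length ys \<longrightarrow> C (ys ! i) = h k)"
        proof -
          have "C (f (Suc n)) \<noteq> C (f n)" using n hb by auto
          moreover have "C (f n) = C w" using n w by simp
          ultimately show ?thesis using T \<open>R (f n) (f (Suc n))\<close> n unfolding transfer_def by fastforce
        qed
      next
        show "h (Suc k) \<noteq> h k" for k using hb by auto
        show "C v = h 0" using hb uv inf(1) by (simp add: ipath_def)
      qed
      then show ?thesis using inf h unfolding ctraces_def ctr_inf_def by auto
    qed
  qed
qed

definition gtransfer :: "('s \<Rightarrow> 's \<Rightarrow> bool) \<Rightarrow> ('s \<Rightarrow> 'c) \<Rightarrow> bool" where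
  "gtransfer R C \<longleftrightarrow> (\<forall>x w f. C x = C w \<longrightarrow> ipath R x f \<longrightarrow> (\<forall>m. C (f m) = C x) \<longrightarrow>
     (\<exists>g. ipath R w g \<and> (\<forall>m. C (g m) = C x)))"

lemma div_sub:
  assumes T: "transfer R C" and G: "gtransfer R C" and uv: "C u = C v"
  shows "div_ctraces R C u \<subseteq> div_ctraces R C v"
proof
  fix tr assume "tr \<in> div_ctraces R C u"
  then obtain f xs where f: "ipath R u f" "tr = ctr_inf C f" "ctr_inf C f = Inl xs"
    unfolding div_ctraces_def by blast
  have ev: "\<exists>n. \<forall>m\<ge>n. (C \<circ> f) m = (C \<circ> f) n"
    using f(3) unfolding ctr_inf_def contract_inf_def by (auto split: if_splits)
  then obtain N where N: "\<forall>m\<ge>N. (C \<circ> f) m = (C \<circ> f) N" by blast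
  have trf: "tr = Inl (destut (map (C \<circ> f) [0..<Suc N]))"
    using f contract_inf_Inl[OF N] unfolding ctr_inf_def by (simp add: o_def del: upt_Suc)
  obtain ys where ys: "fpath R v ys" "destut (map C ys) = destut (map C (map f [0..<Suc N]))"
    using fin_transfer[OF T ipath_prefix[OF f(1)] uv] by metis
  have yne: "ys \<noteq> []" using ys(1) by auto
  have "C (last ys) = last (destut (map C ys))" using yne by (simp add: destut_last last_map)
  also have "\<dots> = C (f N)" using ys(2) by (simp add: destut_last last_map del: upt_Suc)
  finally have cl: "C (last ys) = C (f N)" .
  have ipN: "ipath R (f N) (\<lambda>m. f (N + m))" using f(1) by (simp add: ipath_def)
  have "\<forall>m. C (f (N + m)) = C (f N)"
  proof
    fix m show "C (f (N + m)) = C (f N)" using N[rule_format, of "N + m"] by simp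
  qed
  then obtain g' where g': "ipath R (last ys) g'" "\<forall>m. C (g' m) = C (f N)"
    using G[unfolded gtransfer_def, rule_format, OF cl[symmetric] ipN] by auto
  define M where "M = length ys - 1"
  have lastM: "last ys = ys ! M" using yne by (simp add: M_def last_conv_nth)
  define g where "g = (\<lambda>n. if n < M then ys ! n else g' (n - M))"
  have g0: "g' 0 = last ys" using g'(1) by (simp add: ipath_def)
  have ipg: "ipath R v g"
    unfolding ipath_def
  proof (intro conjI allI)
    show "g 0 = v"
      using fpath_nth0[OF ys(1)] g0 lastM by (auto simp: g_def)
  next
    fix n
    show "R (g n) (g (Suc n))"
    proof (cases "Suc n < M")
      case True
      then show ?thesis using fpath_edge[OF ys(1), of n] by (simp add: g_def M_def)
    next
      case False
      show ?thesis
      proof (cases "Suc n = M")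
        case True
        then have "R (ys ! n) (ys ! M)" using fpath_edge[OF ys(1), of n] yne by (simp add: M_def)
        then show ?thesis using True g0 lastM by (simp add: g_def)
      next
        case False2: False
        then have "n \<ge> M" using False by simp
        then show ?thesis using g'(1) unfolding ipath_def g_def
          by (auto simp: Suc_diff_le)
      qed
    qed
  qed
  have const: "\<forall>m\<ge>M. (C \<circ> g) m = (C \<circ> g) M"
    using g'(2) by (auto simp: g_def)
  have "map (C \<circ> g) [0..<Suc M] = map C ys"
  proof (rule nth_equalityI)
    show "length (map (C \<circ> g) [0..<Suc M]) = length (map C ys)" using yne by (simp add: M_def)
  next
    fix i assume "i < length (map (C \<circ> g) [0..<Suc M])"
    then have "i \<le> M" by simp
    have "length ys \<noteq> 0" using yne by simp
    then have il: "i < length ys" using \<open>i \<le> M\<close> unfolding M_def by linarith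
    have "g i = ys ! i"
    proof (cases "i < M")
      case True then show ?thesis by (simp add: g_def)
    next
      case False
      then have "i = M" using \<open>i \<le> M\<close> by simp
      then show ?thesis using g0 lastM by (simp add: g_def)
    qed
    moreover have "map (C \<circ> g) [0..<Suc M] ! i = C (g i)"
      using \<open>i \<le> M\<close> by (simp del: upt_Suc add: nth_map_upt)
    ultimately show "map (C \<circ> g) [0..<Suc M] ! i = map C ys ! i" using il by simp
  qed
  then have mq: "map (C \<circ> g) [0..<Suc M] = map C ys" .
  have "ctr_inf C g = Inl (destut (map (C \<circ> g) [0..<Suc M]))"
    unfolding ctr_inf_def by (rule contract_inf_Inl[OF const])
  also have "\<dots> = Inl (destut (map C ys))" by (simp only: mq)
  also have "\<dots> = tr" using trf ys(2) by (simp del: upt_Suc)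
  finally have "ctr_inf C g = tr" .
  then show "tr \<in> div_ctraces R C v" using ipg f unfolding div_ctraces_def by (intro CollectI exI[of _ g]) auto
qed



lemma pair_seg:
  assumes fp: "fpath R w ys" and d: "destut (map C ys) = [a, b]"
  shows "\<exists>zs. fpath R w zs \<and> C (last zs) = b \<and> (\<forall>i. Suc i < length zs \<longrightarrow> C (zs ! i) = a)"
proof -
  obtain k where k: "0 < k" "k < length (map C ys)" "\<forall>i<k. map C ys ! i = a"
      "destut (drop k (map C ys)) = [b]"
    using destut_decomp[OF d] by blast
  have kl: "k < length ys" using k(2) by simp
  have "hd (destut (drop k (map C ys))) = hd (drop k (map C ys))"
    by (rule destut_hd) (use k(2) in simp)
  then have "hd (drop k (map C ys)) = b" using k(4) by simp
  then have yk: "C (ys ! k) = b" using kl by (simp add: hd_drop_conv_nth)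
  define zs where "zs = take (Suc k) ys"
  have "fpath R w zs" unfolding zs_def by (rule fpath_take[OF fp]) simp
  moreover have "last zs = ys ! k" unfolding zs_def using kl by (simp add: take_Suc_conv_app_nth)
  moreover have "\<forall>i. Suc i < length zs \<longrightarrow> C (zs ! i) = a"
    using k(3) kl by (auto simp: zs_def)
  ultimately show ?thesis using yk by (intro exI[of _ zs]) simp
qed

lemma cons_transfer:
  assumes cons: "consistent L R C"
  shows "transfer R C"
  unfolding transfer_def
proof (intro allI impI)
  fix x w x' assume xw: "C x = C w" and e: "R x x'" and ne: "C x' \<noteq> C x"
  have "fpath R x [x, x']" using e by simp
  then have "ctr_fin C [x, x'] \<in> ctraces R C x" unfolding ctraces_def by blast
  moreover have "ctraces R C x = ctraces R C w" using cons xw unfolding consistent_def by blast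
  moreover have "ctr_fin C [x, x'] = Inl [C x, C x']" using ne by (simp add: ctr_fin_def)
  ultimately have "Inl [C x, C x'] \<in> ctraces R C w" by simp
  then consider (fin) ys where "fpath R w ys" "destut (map C ys) = [C x, C x']"
    | (inf) g where "ipath R w g" "contract_inf (C \<circ> g) = Inl [C x, C x']"
    unfolding ctraces_def ctr_fin_def ctr_inf_def by auto
  then show "\<exists>ys. fpath R w ys \<and> C (last ys) = C x' \<and> (\<forall>i. Suc i < length ys \<longrightarrow> C (ys ! i) = C x)"
  proof cases
    case fin then show ?thesis using pair_seg[OF fin(1) fin(2)] by blast
  next
    case inf
    have ev: "\<exists>n. \<forall>m\<ge>n. (C \<circ> g) m = (C \<circ> g) n"
      using inf(2) unfolding contract_inf_def by (auto split: if_splits)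
    then obtain N where N: "\<forall>m\<ge>N. (C \<circ> g) m = (C \<circ> g) N" by blast
    have "destut (map (C \<circ> g) [0..<Suc N]) = [C x, C x']"
      using inf(2) contract_inf_Inl[OF N] by (simp add: o_def del: upt_Suc)
    then have "destut (map C (map g [0..<Suc N])) = [C x, C x']" by (simp del: upt_Suc)
    from pair_seg[OF ipath_prefix[OF inf(1)] this] show ?thesis .
  qed
qed

lemma same_contract:
  assumes cons: "consistent L R C" and dp: "div_preserving R C" and uv: "C u = C v"
    and f: "ipath R u f"
  shows "\<exists>g. ipath R v g \<and> contract_inf (C \<circ> g) = contract_inf (C \<circ> f)"
proof (cases "\<exists>xs. ctr_inf C f = Inl xs")
  case True
  then have "ctr_inf C f \<in> div_ctraces R C u" using f unfolding div_ctraces_def by blast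
  then have "ctr_inf C f \<in> div_ctraces R C v" using dp uv unfolding div_preserving_def by metis
  then show ?thesis unfolding div_ctraces_def ctr_inf_def by auto
next
  case False
  have "ctr_inf C f \<in> ctraces R C u" using f unfolding ctraces_def by blast
  then have "ctr_inf C f \<in> ctraces R C v" using cons uv unfolding consistent_def by metis
  then show ?thesis using False unfolding ctraces_def ctr_fin_def ctr_inf_def by auto
qed

lemma dir1:
  assumes cons: "consistent L R C" and dp: "div_preserving R C"
  shows "C u = C v \<Longrightarrow> sat L R \<phi> u = sat L R \<phi> v"
proof (induction \<phi> arbitrary: u v)
  case (Atom p)
  then have "L u = L v" using cons unfolding consistent_def by blast
  then show ?case by simp
next
  case (Neg \<phi>)
  show ?case using Neg.IH[OF Neg.prems] by simp
next
  case (Conj I F)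
  have "sat L R (F i) u = sat L R (F i) v" for i using Conj.IH Conj.prems by blast
  then show ?case by simp
next
  case (EU \<phi> \<psi>)
  have T: "transfer R C" by (rule cons_transfer[OF cons])
  have P: "\<And>u v. C u = C v \<Longrightarrow> sat L R \<phi> u \<Longrightarrow> sat L R \<phi> v" using EU.IH(1) by blast
  have Q: "\<And>u v. C u = C v \<Longrightarrow> sat L R \<psi> u \<Longrightarrow> sat L R \<psi> v" using EU.IH(2) by blast
  have one: "sat L R (EU \<phi> \<psi>) v" if h1: "sat L R (EU \<phi> \<psi>) u" and h2: "C u = C v" for u v
  proof -
    obtain xs where xs: "fpath R u xs" "sat L R \<psi> (last xs)" "\<forall>i. Suc i < length xs \<longrightarrow> sat L R \<phi> (xs ! i)"
      using h1 by auto
    show ?thesis using EU_transfer[where P="sat L R \<phi>" and Q="sat L R \<psi>", OF T P Q xs h2] by simp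
  qed
  show ?case using one EU.prems by metis
next
  case (EG \<phi>)
  have one: "sat L R (EG \<phi>) v" if s: "sat L R (EG \<phi>) u" and uv: "C u = C v" for u v
  proof -
    obtain f where f: "ipath R u f" "\<forall>k. sat L R \<phi> (f k)" using s by auto
    obtain g where g: "ipath R v g" "contract_inf (C \<circ> g) = contract_inf (C \<circ> f)"
      using same_contract[OF cons dp uv f(1)] by blast
    have "range (C \<circ> g) = range (C \<circ> f)"
      using contract_inf_range[of "C \<circ> g"] contract_inf_range[of "C \<circ> f"] g(2) by (simp only:)
    have "sat L R \<phi> (g k)" for k
    proof -
      have "(C \<circ> g) k \<in> range (C \<circ> f)" using \<open>range (C \<circ> g) = range (C \<circ> f)\<close> by blast
      then obtain m where "C (g k) = C (f m)" by auto
      then show ?thesis using EG.IH f(2) by metis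
    qed
    then show ?thesis using g(1) by auto
  qed
  show ?case using one EG.prems by metis
qed

lemma dir2:
  fixes L :: "'s \<Rightarrow> 'ap set" and R :: "'s \<Rightarrow> 's \<Rightarrow> bool" and g :: "'s set \<Rightarrow> 'i"
  assumes inj: "inj g"
    and C_def: "C = (\<lambda>u. {v. \<forall>\<phi>::('ap,'i) ctl. sat L R \<phi> u = sat L R \<phi> v})"
  shows "consistent L R C \<and> div_preserving R C"
proof -
  have Ceq: "C u = C v \<longleftrightarrow> (\<forall>\<phi>::('ap,'i) ctl. sat L R \<phi> u = sat L R \<phi> v)" for u v
  proof
    assume "C u = C v"
    moreover have "v \<in> C v" by (simp add: C_def)
    ultimately have "v \<in> C u" by simp
    then show "\<forall>\<phi>::('ap,'i) ctl. sat L R \<phi> u = sat L R \<phi> v" by (simp add: C_def)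
  next
    assume "\<forall>\<phi>::('ap,'i) ctl. sat L R \<phi> u = sat L R \<phi> v"
    then show "C u = C v" by (auto simp: C_def)
  qed
  have char: "\<exists>\<chi>::('ap,'i) ctl. \<forall>w. sat L R \<chi> w \<longleftrightarrow> C w = C x" for x
  proof -
    have ex: "\<exists>\<phi>::('ap,'i) ctl. sat L R \<phi> x \<and> (\<forall>w. C w = Y \<longrightarrow> \<not> sat L R \<phi> w)"
      if hY: "Y \<in> range C - {C x}" for Y
    proof -
      obtain y where y: "Y = C y" "C y \<noteq> C x" using hY by auto
      then obtain \<phi> :: "('ap,'i) ctl" where \<phi>: "sat L R \<phi> x \<noteq> sat L R \<phi> y" using Ceq by metis
      define \<psi> where "\<psi> = (if sat L R \<phi> x then \<phi> else Neg \<phi>)"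
      have "sat L R \<psi> x" "\<not> sat L R \<psi> y" using \<phi> by (auto simp: \<psi>_def)
      moreover have "\<forall>w. C w = Y \<longrightarrow> \<not> sat L R \<psi> w"
        using \<open>\<not> sat L R \<psi> y\<close> y(1) Ceq by metis
      ultimately show ?thesis by blast
    qed
    define \<delta> where "\<delta> = (\<lambda>Y. SOME \<phi>::('ap,'i) ctl. sat L R \<phi> x \<and> (\<forall>w. C w = Y \<longrightarrow> \<not> sat L R \<phi> w))"
    have \<delta>: "sat L R (\<delta> Y) x \<and> (\<forall>w. C w = Y \<longrightarrow> \<not> sat L R (\<delta> Y) w)" if "Y \<in> range C - {C x}" for Y
      unfolding \<delta>_def by (rule someI_ex[OF ex[OF that]])
    define \<chi> where "\<chi> = Conj (g ` (range C - {C x})) (\<lambda>i. \<delta> (inv g i))"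
    have "sat L R \<chi> w \<longleftrightarrow> C w = C x" for w
    proof
      assume "sat L R \<chi> w"
      then have all: "\<forall>Y\<in>range C - {C x}. sat L R (\<delta> Y) w" using inj by (simp add: \<chi>_def)
      show "C w = C x"
      proof (rule ccontr)
        assume "C w \<noteq> C x"
        then have "C w \<in> range C - {C x}" by auto
        then show False using all \<delta> by blast
      qed
    next
      assume cw: "C w = C x"
      have "sat L R (\<delta> Y) w" if "Y \<in> range C - {C x}" for Y
        using \<delta>[OF that] cw Ceq by metis
      then show "sat L R \<chi> w" using inj by (simp add: \<chi>_def)
    qed
    then show ?thesis by blast
  qed
  have T: "transfer R C"
    unfolding transfer_def
  proof (intro allI impI)
    fix x w x' assume xw: "C x = C w" and e: "R x x'" and ne: "C x' \<noteq> C x"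
    obtain \<chi>1 :: "('ap,'i) ctl" where c1: "\<forall>w. sat L R \<chi>1 w \<longleftrightarrow> C w = C x" using char by blast
    obtain \<chi>2 :: "('ap,'i) ctl" where c2: "\<forall>w. sat L R \<chi>2 w \<longleftrightarrow> C w = C x'" using char by blast
    have "fpath R x [x, x']" using e by simp
    then have "sat L R (EU \<chi>1 \<chi>2) x" using c1 c2 by (intro sat.simps(4)[THEN iffD2] exI[of _ "[x, x']"]) auto
    then have "sat L R (EU \<chi>1 \<chi>2) w" using xw Ceq by metis
    then show "\<exists>ys. fpath R w ys \<and> C (last ys) = C x' \<and> (\<forall>i. Suc i < length ys \<longrightarrow> C (ys ! i) = C x)"
      using c1 c2 by auto
  qed
  have G: "gtransfer R C"
    unfolding gtransfer_def
  proof (intro allI impI)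
    fix x w f assume xw: "C x = C w" and f: "ipath R x f" and fc: "\<forall>m. C (f m) = C x"
    obtain \<chi>1 :: "('ap,'i) ctl" where c1: "\<forall>w. sat L R \<chi>1 w \<longleftrightarrow> C w = C x" using char by blast
    have "sat L R (EG \<chi>1) x" using f fc c1 by auto
    then have "sat L R (EG \<chi>1) w" using xw Ceq by metis
    then show "\<exists>g. ipath R w g \<and> (\<forall>m. C (g m) = C x)" using c1 by auto
  qed
  have "consistent L R C"
    unfolding consistent_def
  proof (intro allI impI conjI)
    fix u v assume uv: "C u = C v"
    have "p \<in> L u \<longleftrightarrow> p \<in> L v" for p
      using uv Ceq[of u v] by (metis sat.simps(1))
    then show "L u = L v" by blast
    show "ctraces R C u = ctraces R C v" using ctraces_sub[OF T] uv by (metis subset_antisym)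
  qed
  moreover have "div_preserving R C"
    unfolding div_preserving_def using div_sub[OF T G] by (metis subset_antisym)
  ultimately show ?thesis by blast
qed

theorem theorem7p1:
  fixes L :: "'s \<Rightarrow> 'ap set" and R :: "'s \<Rightarrow> 's \<Rightarrow> bool" and s t :: 's
  assumes "\<exists>g :: 's set \<Rightarrow> 'i. inj g"
  shows "bbisim_div L R s t \<longleftrightarrow> (\<forall>\<phi> :: ('ap, 'i) ctl. sat L R \<phi> s \<longleftrightarrow> sat L R \<phi> t)"
proof
  assume "bbisim_div L R s t"
  then obtain C :: "'s \<Rightarrow> 's set" where C: "consistent L R C" "div_preserving R C" "C s = C t"
    unfolding bbisim_div_def by blast
  show "\<forall>\<phi> :: ('ap, 'i) ctl. sat L R \<phi> s \<longleftrightarrow> sat L R \<phi> t"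
    using dir1[OF C(1) C(2) C(3)] by blast
next
  assume eq: "\<forall>\<phi> :: ('ap, 'i) ctl. sat L R \<phi> s \<longleftrightarrow> sat L R \<phi> t"
  obtain g :: "'s set \<Rightarrow> 'i" where g: "inj g" using assms by blast
  define C where "C = (\<lambda>u. {v. \<forall>\<phi>::('ap,'i) ctl. sat L R \<phi> u = sat L R \<phi> v})"
  have cd: "consistent L R C \<and> div_preserving R C" by (rule dir2[OF g C_def])
  have "C s = C t" using eq by (auto simp: C_def)
  then show "bbisim_div L R s t" using cd unfolding bbisim_div_def by blast
qed

end
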